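(* Let $\mathbb S$ be the free semigroup action on the compact metric space $(X,d)$ generated by continuous maps $g_1,\dots,g_p$. For every $x\in X$, $$\sup_{\omega\in\Sigma_p^+}h_{D\times d}((\omega,x))\le h_d(x)+\log p.$$
   Context: Setting: $G_n^*$ the set of words $\underline g=g_{i_n}\cdots g_{i_1}$, $i_j\in\{1,\dots,p\}$; $d_{\underline g}(x,y)=\max_{0\le j\le n}d(g_{i_j}\cdots g_{i_1}x,g_{i_j}\cdots g_{i_1}y)$; $b_d(K,\underline g,\varepsilon)$ is the minimal cardinality of a $(\underline g,\varepsilon)$-spanning subset $F$ of $K$ (every $x\in K$ has $y\in F$ with $d_{\underline g}(x,y)<\varepsilon$). $B_d(K,\mathbb S,\varepsilon)=\limsup_n\frac1n\log\big(p^{-n}\sum_{\underline g\in G_n^*}b_d(K,\underline g,\varepsilon)\big)$, $h_d(x,\varepsilon)=\inf\{B_d(K,\mathbb S,\varepsilon):K\text{ compact neighbourhood of }x\}$, $h_d(x)=\lim_{\varepsilon\to0^+}h_d(x,\varepsilon)$. Skew product: $\Sigma_p^+=\{1,\dots,p\}^{\mathbb N}$ with metric $D(\omega,\omega')=p^{-\min\{n:\omega_n\ne\omega'_n\}}$, $\mathcal F_G(\omega,x)=(\sigma\omega,g_{\omega_1}(x))$, metric $D\times d=\max(D,d)$ on $\Sigma_p^+\times X$. For $V\subset\Sigma_p^+\times X$ let $B_{D\times d}(V,\mathcal F_G,\varepsilon)=\limsup_n\frac1n\log b_n(V,\varepsilon)$, where $b_n(V,\varepsilon)$ is the minimal cardinality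 of an $(n,\varepsilon)$-spanning set of $V$ for the Bowen metric of $\mathcal F_G$; $h_{D\times d}(z,\varepsilon)=\inf\{B_{D\times d}(V,\mathcal F_G,\varepsilon):V\text{ compact neighbourhood of }z\}$ and $h_{D\times d}(z)=\lim_{\varepsilon\to0^+}h_{D\times d}(z,\varepsilon)$ (the entropy function of $\mathcal F_G$). *)

theory Defs
  imports "HOL-Analysis.Analysis"
begin

text \<open>A word g_{i_n} ... g_{i_1} is represented by the list [i_1, ..., i_n] of indices in {1..p}.
  G_n^* is the set of such lists of length n (so it has p^n elements).\<close>

definition words :: "nat \<Rightarrow> nat \<Rightarrow> nat list set" where
  "words p n = {ws. length ws = n \<and> set ws \<subseteq> {1..p}}"

definition orbit :: "(nat \<Rightarrow> 'a \<Rightarrow> 'a) \<Rightarrow> nat list \<Rightarrow> nat \<Rightarrow> 'a \<Rightarrow> 'a" where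
  "orbit g ws j x = fold (\<lambda>i y. g i y) (take j ws) x"

definition word_dist :: "(nat \<Rightarrow> 'a::metric_space \<Rightarrow> 'a) \<Rightarrow> nat list \<Rightarrow> 'a \<Rightarrow> 'a \<Rightarrow> real" where
  "word_dist g ws x y = Max ((\<lambda>j. dist (orbit g ws j x) (orbit g ws j y)) ` {0..length ws})"

definition word_spanning :: "(nat \<Rightarrow> 'a::metric_space \<Rightarrow> 'a) \<Rightarrow> 'a set \<Rightarrow> nat list \<Rightarrow> real \<Rightarrow> 'a set \<Rightarrow> bool" where
  "word_spanning g K ws \<epsilon> F \<longleftrightarrow> F \<subseteq> K \<and> (\<forall>x\<in>K. \<exists>y\<in>F. word_dist g ws x y < \<epsilon>)"

definition bspan :: "(nat \<Rightarrow> 'a::metric_space \<Rightarrow> 'a) \<Rightarrow> 'a set \<Rightarrow> nat list \<Rightarrow> real \<Rightarrow> nat" where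
  "bspan g K ws \<epsilon> = (LEAST k. \<exists>F. finite F \<and> card F = k \<and> word_spanning g K ws \<epsilon> F)"

definition Bsemi :: "nat \<Rightarrow> (nat \<Rightarrow> 'a::metric_space \<Rightarrow> 'a) \<Rightarrow> 'a set \<Rightarrow> real \<Rightarrow> ereal" where
  "Bsemi p g K \<epsilon> = limsup (\<lambda>n. ereal (ln ((\<Sum>ws\<in>words p n. real (bspan g K ws \<epsilon>)) / real p ^ n) / real n))"

definition compact_nhd_in :: "'a::topological_space set \<Rightarrow> 'a \<Rightarrow> 'a set \<Rightarrow> bool" where
  "compact_nhd_in X x K \<longleftrightarrow> K \<subseteq> X \<and> compact K \<and>
     (\<exists>U. openin (top_of_set X) U \<and> x \<in> U \<and> U \<subseteq> K)"

definition hsemi_eps :: "nat \<Rightarrow> (nat \<Rightarrow> 'a::metric_space \<Rightarrow> 'a) \<Rightarrow> 'a set \<Rightarrow> 'a \<Rightarrow> real \<Rightarrow> ereal" where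
  "hsemi_eps p g X x \<epsilon> = (INF K\<in>{K. compact_nhd_in X x K}. Bsemi p g K \<epsilon>)"

definition hsemi :: "nat \<Rightarrow> (nat \<Rightarrow> 'a::metric_space \<Rightarrow> 'a) \<Rightarrow> 'a set \<Rightarrow> 'a \<Rightarrow> ereal" where
  "hsemi p g X x = Lim (at_right 0) (hsemi_eps p g X x)"

text \<open>Sigma_p^+ = {1..p}^N; a sequence (omega_1, omega_2, ...) is represented by
  omega :: nat => nat with omega 0 = omega_1, omega 1 = omega_2, etc.\<close>
definition shift_space :: "nat \<Rightarrow> (nat \<Rightarrow> nat) set" where
  "shift_space p = {\<omega>. \<forall>n. \<omega> n \<in> {1..p}}"

text \<open>D(omega, omega') = p^{-min{n >= 1 : omega_n ~= omega'_n}} (and 0 if omega = omega')\<close>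
definition Dshift :: "nat \<Rightarrow> (nat \<Rightarrow> nat) \<Rightarrow> (nat \<Rightarrow> nat) \<Rightarrow> real" where
  "Dshift p \<omega> \<omega>' = (if \<omega> = \<omega>' then 0
      else inverse (real p) ^ (Suc (LEAST n. \<omega> n \<noteq> \<omega>' n)))"

definition skew_dist :: "nat \<Rightarrow> (nat \<Rightarrow> nat) \<times> 'a::metric_space \<Rightarrow> (nat \<Rightarrow> nat) \<times> 'a \<Rightarrow> real" where
  "skew_dist p z z' = max (Dshift p (fst z) (fst z')) (dist (snd z) (snd z'))"

definition skew :: "(nat \<Rightarrow> 'a \<Rightarrow> 'a) \<Rightarrow> (nat \<Rightarrow> nat) \<times> 'a \<Rightarrow> (nat \<Rightarrow> nat) \<times> 'a" where
  "skew g z = ((\<lambda>n. fst z (Suc n)), g (fst z 0) (snd z))"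

definition bowen_dist :: "nat \<Rightarrow> (nat \<Rightarrow> 'a::metric_space \<Rightarrow> 'a) \<Rightarrow> nat \<Rightarrow> (nat \<Rightarrow> nat) \<times> 'a \<Rightarrow> (nat \<Rightarrow> nat) \<times> 'a \<Rightarrow> real" where
  "bowen_dist p g n z z' = Max ({0} \<union> (\<lambda>j. skew_dist p ((skew g ^^ j) z) ((skew g ^^ j) z')) ` {0..<n})"

definition bowen_spanning :: "nat \<Rightarrow> (nat \<Rightarrow> 'a::metric_space \<Rightarrow> 'a) \<Rightarrow> ((nat \<Rightarrow> nat) \<times> 'a) set \<Rightarrow> nat \<Rightarrow> real \<Rightarrow> ((nat \<Rightarrow> nat) \<times> 'a) set \<Rightarrow> bool" where
  "bowen_spanning p g V n \<epsilon> E \<longleftrightarrow> E \<subseteq> V \<and> (\<forall>z\<in>V. \<exists>z'\<in>E. bowen_dist p g n z z' < \<epsilon>)"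

definition bn_span :: "nat \<Rightarrow> (nat \<Rightarrow> 'a::metric_space \<Rightarrow> 'a) \<Rightarrow> ((nat \<Rightarrow> nat) \<times> 'a) set \<Rightarrow> nat \<Rightarrow> real \<Rightarrow> nat" where
  "bn_span p g V n \<epsilon> = (LEAST k. \<exists>E. finite E \<and> card E = k \<and> bowen_spanning p g V n \<epsilon> E)"

definition Bskew :: "nat \<Rightarrow> (nat \<Rightarrow> 'a::metric_space \<Rightarrow> 'a) \<Rightarrow> ((nat \<Rightarrow> nat) \<times> 'a) set \<Rightarrow> real \<Rightarrow> ereal" where
  "Bskew p g V \<epsilon> = limsup (\<lambda>n. ereal (ln (real (bn_span p g V n \<epsilon>)) / real n))"

definition skew_topology :: "nat \<Rightarrow> 'a::metric_space set \<Rightarrow> ((nat \<Rightarrow> nat) \<times> 'a) topology" where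
  "skew_topology p X = Metric_space.mtopology (shift_space p \<times> X) (skew_dist p)"

definition compact_nhd_skew :: "nat \<Rightarrow> 'a::metric_space set \<Rightarrow> (nat \<Rightarrow> nat) \<times> 'a \<Rightarrow> ((nat \<Rightarrow> nat) \<times> 'a) set \<Rightarrow> bool" where
  "compact_nhd_skew p X z V \<longleftrightarrow> compactin (skew_topology p X) V \<and>
     (\<exists>U. openin (skew_topology p X) U \<and> z \<in> U \<and> U \<subseteq> V)"

definition hskew_eps :: "nat \<Rightarrow> (nat \<Rightarrow> 'a::metric_space \<Rightarrow> 'a) \<Rightarrow> 'a set \<Rightarrow> (nat \<Rightarrow> nat) \<times> 'a \<Rightarrow> real \<Rightarrow> ereal" where
  "hskew_eps p g X z \<epsilon> = (INF V\<in>{V. compact_nhd_skew p X z V}. Bskew p g V \<epsilon>)"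

definition hskew :: "nat \<Rightarrow> (nat \<Rightarrow> 'a::metric_space \<Rightarrow> 'a) \<Rightarrow> 'a set \<Rightarrow> (nat \<Rightarrow> nat) \<times> 'a \<Rightarrow> ereal" where
  "hskew p g X z = Lim (at_right 0) (hskew_eps p g X z)"

end

theory Submission
  imports Defs
begin


lemma shift_space_PiE: "shift_space p = PiE UNIV (\<lambda>_. {1..p})"
  by (auto simp: shift_space_def PiE_def)

lemma compact_shift: "compact (shift_space p)"
proof -
  have "compactin (product_topology (\<lambda>_. euclidean) UNIV) (PiE UNIV (\<lambda>_::nat. {1..p::nat}))"
    by (subst compactin_PiE) (auto intro: finite_imp_compact)
  then show ?thesis by (simp add: euclidean_product_topology shift_space_PiE)
qed

lemma shift_seq_compact:
  fixes \<omega> :: "nat \<Rightarrow> nat \<Rightarrow> nat"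
  assumes "\<And>k. \<omega> k \<in> shift_space p"
  obtains l r where "l \<in> shift_space p" "strict_mono r" "\<And>i. eventually (\<lambda>n. \<omega> (r n) i = l i) sequentially"
proof -
  obtain l r where l: "l \<in> shift_space p" "strict_mono r" "(\<omega> \<circ> r) \<longlonglongrightarrow> l"
    using seq_compactE[OF compact_imp_seq_compact[OF compact_shift], of \<omega> p] assms by blast
  have "eventually (\<lambda>n. \<omega> (r n) i = l i) sequentially" for i
  proof -
    have "((\<lambda>n. (\<omega> \<circ> r) n i) \<longlonglongrightarrow> l i)"
      using continuous_on_tendsto_compose[OF continuous_on_product_coordinates l(3)] by auto
    then have ev: "eventually (\<lambda>n. (\<omega> \<circ> r) n i < l i + 1) sequentially"
      by (rule order_tendstoD) simp
    show ?thesis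
    proof (cases "l i = 0")
      case True
      show ?thesis using ev by eventually_elim (use True in simp)
    next
      case False
      then have "l i - 1 < l i" by simp
      then have "eventually (\<lambda>n. l i - 1 < (\<omega> \<circ> r) n i) sequentially"
        by (rule order_tendstoD(1)[OF \<open>((\<lambda>n. (\<omega> \<circ> r) n i) \<longlonglongrightarrow> l i)\<close>])
      with ev show ?thesis by eventually_elim simp
    qed
  qed
  with l that show ?thesis by blast
qed

lemma Dshift_nonneg: "p \<ge> 1 \<Longrightarrow> 0 \<le> Dshift p a b"
  by (simp add: Dshift_def)

lemma Dshift_commute: "Dshift p a b = Dshift p b a"
  unfolding Dshift_def by (auto simp: eq_commute)

lemma Dshift_zero: "p \<ge> 1 \<Longrightarrow> Dshift p a b = 0 \<longleftrightarrow> a = b"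
  by (simp add: Dshift_def)

lemma Dshift_ultra:
  assumes "p \<ge> 1"
  shows "Dshift p a c \<le> max (Dshift p a b) (Dshift p b c)"
proof (cases "a = c")
  case True
  then have "Dshift p a c = 0" by (simp add: Dshift_def)
  moreover have "0 \<le> Dshift p a b" by (rule Dshift_nonneg[OF assms])
  ultimately show ?thesis by (metis max.coboundedI1)
next
  case False
  define m where "m = (LEAST n. a n \<noteq> c n)"
  have "\<exists>n. a n \<noteq> c n" using False by (auto simp: fun_eq_iff)
  then have amc: "a m \<noteq> c m" unfolding m_def by (rule LeastI_ex)
  have ip: "0 \<le> inverse (real p)" "inverse (real p) \<le> 1" using assms by (auto simp: inverse_le_1_iff)
  have Dac: "Dshift p a c = inverse (real p) ^ Suc m" using False by (simp add: Dshift_def m_def)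
  show ?thesis
  proof (cases "a m \<noteq> b m")
    case True
    then have "a \<noteq> b" by auto
    have "(LEAST n. a n \<noteq> b n) \<le> m" using True by (rule Least_le)
    then have "inverse (real p) ^ Suc m \<le> inverse (real p) ^ Suc (LEAST n. a n \<noteq> b n)"
      using ip by (intro power_decreasing) auto
    then show ?thesis using \<open>a \<noteq> b\<close> Dac by (simp add: Dshift_def)
  next
    case False
    then have T: "b m \<noteq> c m" using amc by auto
    then have "b \<noteq> c" by auto
    have "(LEAST n. b n \<noteq> c n) \<le> m" using T by (rule Least_le)
    then have "inverse (real p) ^ Suc m \<le> inverse (real p) ^ Suc (LEAST n. b n \<noteq> c n)"
      using ip by (intro power_decreasing) auto
    then show ?thesis using \<open>b \<noteq> c\<close> Dac by (simp add: Dshift_def)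
  qed
qed

lemma Dshift_agree:
  assumes "p \<ge> 1" "a \<in> shift_space p" "b \<in> shift_space p" "\<And>i. i < m \<Longrightarrow> a i = b i"
  shows "Dshift p a b \<le> (1/2) ^ Suc m"
proof (cases "a = b")
  case True then show ?thesis by (simp add: Dshift_def)
next
  case False
  have "p \<noteq> 1"
  proof
    assume "p = 1"
    then have "a = b" using assms(2,3) by (intro ext) (force simp: shift_space_def)
    then show False using False by simp
  qed
  then have p2: "p \<ge> 2" using assms(1) by auto
  define L where "L = (LEAST n. a n \<noteq> b n)"
  have "\<exists>n. a n \<noteq> b n" using False by (auto simp: fun_eq_iff)
  then have aLb: "a L \<noteq> b L" unfolding L_def by (rule LeastI_ex)
  then have "m \<le> L" using assms(4) not_le by blast
  have "inverse (real p) ^ Suc L \<le> (1/2) ^ Suc L"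
    using p2 by (intro power_mono) (auto simp: field_simps)
  also have "\<dots> \<le> (1/2) ^ Suc m" using \<open>m \<le> L\<close> by (intro power_decreasing) auto
  finally show ?thesis using False by (simp add: Dshift_def L_def)
qed

lemma Dshift_small:
  assumes "p \<ge> 1" "Dshift p a b < inverse (real p) ^ m" "i < m"
  shows "a i = b i"
proof (rule ccontr)
  assume ne: "a i \<noteq> b i"
  then have "a \<noteq> b" by auto
  define L where "L = (LEAST n. a n \<noteq> b n)"
  have "L \<le> i" unfolding L_def using ne by (rule Least_le)
  have ip: "0 \<le> inverse (real p)" "inverse (real p) \<le> 1" using assms(1) by (auto simp: inverse_le_1_iff)
  have "inverse (real p) ^ m \<le> inverse (real p) ^ Suc L"
    using ip \<open>L \<le> i\<close> assms(3) by (intro power_decreasing) auto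
  then show False using assms(2) \<open>a \<noteq> b\<close> by (simp add: Dshift_def L_def)
qed

lemma aux1: "a \<le> max b u + max c v" if "a \<le> max b c" "0 \<le> b" "0 \<le> c" "0 \<le> u" "0 \<le> v" for a b c u v :: real
proof -
  have "max b c \<le> b + c" using that(2,3) by (simp add: max_def)
  moreover have "b \<le> max b u" "c \<le> max c v" by simp_all
  ultimately show ?thesis using that(1) by linarith
qed
lemma aux2: "a \<le> max u b + max v c" if "a \<le> b + c" for a b c u v :: real
proof -
  have "b \<le> max u b" "c \<le> max v c" by simp_all
  then show ?thesis using that by linarith
qed

lemma skew_triangle:
  assumes "p \<ge> 1"
  shows "skew_dist p x z \<le> skew_dist p x y + skew_dist p y z"
proof -
  have t1: "Dshift p (fst x) (fst z) \<le> max (Dshift p (fst x) (fst y)) (dist (snd x) (snd y)) + max (Dshift p (fst y) (fst z)) (dist (snd y) (snd z))"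
    by (rule aux1[OF Dshift_ultra[OF assms] Dshift_nonneg[OF assms] Dshift_nonneg[OF assms] zero_le_dist zero_le_dist])
  have t2: "dist (snd x) (snd z) \<le> max (Dshift p (fst x) (fst y)) (dist (snd x) (snd y)) + max (Dshift p (fst y) (fst z)) (dist (snd y) (snd z))"
    by (rule aux2[OF dist_triangle])
  have aux3: "max a b \<le> s" if "a \<le> s" "b \<le> s" for a b s :: real
    using that by simp
  show ?thesis unfolding skew_dist_def by (rule aux3[OF t1 t2])
qed

lemma skew_zero:
  assumes "p \<ge> 1"
  shows "skew_dist p x y = 0 \<longleftrightarrow> x = y"
proof -
  have mz: "max A B = 0 \<longleftrightarrow> A = 0 \<and> B = 0" if "A \<ge> 0" "B \<ge> 0" for A B :: real
    using that by (auto simp: max_def)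
  show ?thesis unfolding skew_dist_def
    using mz[OF Dshift_nonneg[OF assms, of "fst x" "fst y"] zero_le_dist[of "snd x" "snd y"]]
      Dshift_zero[OF assms, of "fst x" "fst y"] prod_eq_iff[of x y] by simp
qed

lemma skew_nonneg: "p \<ge> 1 \<Longrightarrow> 0 \<le> skew_dist p x y"
  unfolding skew_dist_def using Dshift_nonneg[of p "fst x" "fst y"] by (simp add: le_max_iff_disj)

lemma skew_commute: "skew_dist p x y = skew_dist p y x"
  unfolding skew_dist_def by (simp add: Dshift_commute dist_commute)

lemma skew_metric:
  assumes "p \<ge> 1"
  shows "Metric_space (shift_space p \<times> X) (skew_dist p)"
proof (rule Metric_space.intro)
  fix x y z
  show "0 \<le> skew_dist p x y" by (rule skew_nonneg[OF assms])
  show "skew_dist p x y = skew_dist p y x" by (rule skew_commute)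
  show "skew_dist p x y = 0 \<longleftrightarrow> x = y" by (rule skew_zero[OF assms])
  show "skew_dist p x z \<le> skew_dist p x y + skew_dist p y z" by (rule skew_triangle[OF assms])
qed

lemma half_pow_small: "0 < (\<epsilon>::real) \<Longrightarrow> \<exists>m. (1/2::real) ^ Suc m < \<epsilon>"
proof -
  assume "0 < \<epsilon>"
  then obtain n where n: "(1/2::real) ^ n < \<epsilon>" using real_arch_pow_inv[of \<epsilon> "1/2"] by auto
  have "(1/2::real) ^ Suc n \<le> (1/2) ^ n" by (intro power_decreasing) auto
  with n show ?thesis by (intro exI[of _ n]) linarith
qed

lemma compact_skew_prod:
  fixes X K :: "'a::metric_space set"
  assumes p: "p \<ge> 1" and K: "compact K" "K \<subseteq> X"
  shows "compactin (skew_topology p X) (shift_space p \<times> K)"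
proof -
  interpret Metric_space "shift_space p \<times> X" "skew_dist p" by (rule skew_metric[OF p])
  show ?thesis unfolding skew_topology_def compactin_sequentially
  proof (intro conjI allI impI)
    show "shift_space p \<times> K \<subseteq> shift_space p \<times> X" using K by auto
    fix \<sigma> :: "nat \<Rightarrow> (nat \<Rightarrow> nat) \<times> 'a"
    assume "range \<sigma> \<subseteq> shift_space p \<times> K"
    then have "\<And>k. \<sigma> k \<in> shift_space p \<times> K" by auto
    then have \<omega>: "\<And>k. fst (\<sigma> k) \<in> shift_space p" and y: "\<And>k. snd (\<sigma> k) \<in> K"
      by (auto simp: mem_Times_iff)
    obtain l r where l: "l \<in> shift_space p" "strict_mono r"
        "\<And>i. eventually (\<lambda>n. fst (\<sigma> (r n)) i = l i) sequentially"
      using shift_seq_compact[of "\<lambda>k. fst (\<sigma> k)" p] \<omega> by blast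
    have "\<forall>n. snd (\<sigma> (r n)) \<in> K" using y by auto
    then obtain y0 r2 where y0: "y0 \<in> K" "strict_mono r2" "((\<lambda>n. snd (\<sigma> (r n))) \<circ> r2) \<longlonglongrightarrow> y0"
      using seq_compactE[OF compact_imp_seq_compact[OF K(1)]] by metis
    have lim: "limitin mtopology (\<sigma> \<circ> (r \<circ> r2)) (l, y0) sequentially"
      unfolding limitin_metric
    proof (intro conjI allI impI)
      show "(l, y0) \<in> shift_space p \<times> X" using l y0 K by auto
      fix \<epsilon> :: real assume "0 < \<epsilon>"
      then obtain m where m: "(1/2::real) ^ Suc m < \<epsilon>" using half_pow_small by blast
      have "eventually (\<lambda>n. \<forall>i\<in>{..<m}. fst (\<sigma> (r n)) i = l i) sequentially"
        by (rule eventually_ball_finite) (use l(3) in auto)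
      then have e1: "eventually (\<lambda>n. \<forall>i\<in>{..<m}. fst (\<sigma> (r (r2 n))) i = l i) sequentially"
        by (rule eventually_subseq[OF y0(2)])
      have e2: "eventually (\<lambda>n. dist (snd (\<sigma> (r (r2 n)))) y0 < \<epsilon>) sequentially"
        using tendstoD[OF y0(3) \<open>0 < \<epsilon>\<close>] by (simp add: o_def)
      show "eventually (\<lambda>n. (\<sigma> \<circ> (r \<circ> r2)) n \<in> shift_space p \<times> X \<and>
                skew_dist p ((\<sigma> \<circ> (r \<circ> r2)) n) (l, y0) < \<epsilon>) sequentially"
        using e1 e2
      proof eventually_elim
        case (elim n)
        have "Dshift p (fst (\<sigma> (r (r2 n)))) l \<le> (1/2) ^ Suc m"
          by (rule Dshift_agree[OF p \<omega> l(1)]) (use elim in auto)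
        then have "Dshift p (fst (\<sigma> (r (r2 n)))) l < \<epsilon>" using m by linarith
        moreover have "\<sigma> (r (r2 n)) \<in> shift_space p \<times> X" using \<omega> y K by (auto simp: mem_Times_iff)
        ultimately show ?case using elim by (simp add: skew_dist_def)
      qed
    qed
    show "\<exists>l r. l \<in> shift_space p \<times> K \<and> strict_mono r \<and> limitin mtopology (\<sigma> \<circ> r) l sequentially"
      using lim l(2) y0(1,2) l(1) strict_mono_o by blast
  qed
qed

lemma nhd_skew_prod:
  fixes X K :: "'a::metric_space set"
  assumes p: "p \<ge> 1" and K: "compact_nhd_in X x K" and \<omega>: "\<omega> \<in> shift_space p"
  shows "compact_nhd_skew p X (\<omega>, x) (shift_space p \<times> K)"
proof -
  interpret Metric_space "shift_space p \<times> X" "skew_dist p" by (rule skew_metric[OF p])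
  obtain U where U: "openin (top_of_set X) U" "x \<in> U" "U \<subseteq> K" and KX: "K \<subseteq> X" "compact K"
    using K unfolding compact_nhd_in_def by blast
  have UX: "U \<subseteq> X" using openin_imp_subset[OF U(1)] by simp
  have op: "openin (skew_topology p X) (shift_space p \<times> U)"
    unfolding skew_topology_def openin_mtopology
  proof (intro conjI allI impI)
    show "shift_space p \<times> U \<subseteq> shift_space p \<times> X" using UX by auto
    fix z assume z: "z \<in> shift_space p \<times> U"
    then obtain e where e: "e > 0" "\<And>x'. x' \<in> X \<Longrightarrow> dist x' (snd z) < e \<Longrightarrow> x' \<in> U"
      using U(1) unfolding openin_euclidean_subtopology_iff by (auto simp: mem_Times_iff)
    show "\<exists>r>0. mball z r \<subseteq> shift_space p \<times> U"
    proof (intro exI[of _ e] conjI)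
      show "mball z e \<subseteq> shift_space p \<times> U"
      proof
        fix w assume "w \<in> mball z e"
        then have w: "w \<in> shift_space p \<times> X" "skew_dist p z w < e" by auto
        then have "dist (snd w) (snd z) < e" by (simp add: skew_dist_def dist_commute)
        then show "w \<in> shift_space p \<times> U" using e(2) w(1) by (auto simp: mem_Times_iff)
      qed
    qed (use e in auto)
  qed
  show ?thesis unfolding compact_nhd_skew_def
    using compact_skew_prod[OF p KX(2,1)] op \<omega> U(2,3) by blast
qed

lemma finite_min_delta:
  assumes "finite A" "\<And>j. j \<in> A \<Longrightarrow> \<exists>\<delta>>0. P j \<delta>"
    "\<And>j \<delta> \<delta>'. P j \<delta> \<Longrightarrow> 0 < \<delta>' \<Longrightarrow> \<delta>' \<le> \<delta> \<Longrightarrow> P j \<delta>'"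
  shows "\<exists>\<delta>>0. \<forall>j\<in>A. P j (\<delta>::real)"
  using assms(1,2)
proof (induction A rule: finite_induct)
  case empty then show ?case by (intro exI[of _ 1]) auto
next
  case (insert a A)
  obtain d1 where d1: "d1 > 0" "P a d1" using insert.prems by blast
  obtain d2 where d2: "d2 > 0" "\<forall>j\<in>A. P j d2" using insert.IH insert.prems by blast
  show ?case
    by (intro exI[of _ "min d1 d2"]) (use d1 d2 assms(3) in auto)
qed

lemma skew_space_map:
  assumes "\<And>i. i \<in> {1..p} \<Longrightarrow> g i ` X \<subseteq> X" "z \<in> shift_space p \<times> X"
  shows "skew g z \<in> shift_space p \<times> X"
proof -
  obtain \<omega> y where z: "z = (\<omega>, y)" "\<omega> \<in> shift_space p" "y \<in> X" using assms(2) by auto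
  have "\<omega> 0 \<in> {1..p}" using z(2) by (simp add: shift_space_def)
  then have "g (\<omega> 0) y \<in> X" using assms(1) z(3) by blast
  moreover have "(\<lambda>n. \<omega> (Suc n)) \<in> shift_space p" using z(2) by (simp add: shift_space_def)
  ultimately show ?thesis by (simp add: z skew_def)
qed

lemma skew_iter_space:
  assumes "\<And>i. i \<in> {1..p} \<Longrightarrow> g i ` X \<subseteq> X" "z \<in> shift_space p \<times> X"
  shows "(skew g ^^ j) z \<in> shift_space p \<times> X"
  by (induction j) (use assms skew_space_map[OF assms(1)] in auto)

lemma skew_cont:
  assumes p: "p \<ge> 1" and g: "\<And>i. i \<in> {1..p} \<Longrightarrow> continuous_on X (g i)"
    and w: "w \<in> shift_space p \<times> X" and e: "\<epsilon> > 0"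
  shows "\<exists>\<delta>>0. \<forall>w'\<in>shift_space p \<times> X. skew_dist p w w' < \<delta> \<longrightarrow> skew_dist p (skew g w) (skew g w') < \<epsilon>"
proof -
  obtain \<omega> y where wy: "w = (\<omega>, y)" "\<omega> \<in> shift_space p" "y \<in> X" using w by auto
  have "\<omega> 0 \<in> {1..p}" using wy(2) by (simp add: shift_space_def)
  then obtain d1 where d1: "d1 > 0" "\<And>y'. y' \<in> X \<Longrightarrow> dist y' y < d1 \<Longrightarrow> dist (g (\<omega> 0) y') (g (\<omega> 0) y) < \<epsilon>"
    using g[of "\<omega> 0"] wy(3) e unfolding continuous_on_iff by metis
  obtain m where m: "(1/2::real) ^ Suc m < \<epsilon>" using half_pow_small[OF e] by blast
  have ipos: "inverse (real p) ^ Suc m > 0" using p by simp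
  show ?thesis
  proof (intro exI[of _ "min d1 (inverse (real p) ^ Suc m)"] conjI ballI impI)
    show "min d1 (inverse (real p) ^ Suc m) > 0" using d1 ipos by simp
    fix w' assume w': "w' \<in> shift_space p \<times> X" and lt: "skew_dist p w w' < min d1 (inverse (real p) ^ Suc m)"
    obtain \<omega>' y' where wy': "w' = (\<omega>', y')" "\<omega>' \<in> shift_space p" "y' \<in> X" using w' by auto
    have D: "Dshift p \<omega> \<omega>' < inverse (real p) ^ Suc m" and dd: "dist y y' < d1"
      using lt by (auto simp: wy wy' skew_dist_def)
    have agree: "\<omega> i = \<omega>' i" if "i < Suc m" for i by (rule Dshift_small[OF p D that])
    have "Dshift p (\<lambda>n. \<omega> (Suc n)) (\<lambda>n. \<omega>' (Suc n)) \<le> (1/2) ^ Suc m"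
      by (rule Dshift_agree[OF p]) (use wy(2) wy'(2) agree in \<open>auto simp: shift_space_def\<close>)
    then have D2: "Dshift p (\<lambda>n. \<omega> (Suc n)) (\<lambda>n. \<omega>' (Suc n)) < \<epsilon>" using m by linarith
    have "dist (g (\<omega> 0) y') (g (\<omega> 0) y) < \<epsilon>" using d1(2)[OF wy'(3)] dd by (simp add: dist_commute)
    then have D3: "dist (g (\<omega> 0) y) (g (\<omega>' 0) y') < \<epsilon>" using agree[of 0] by (simp add: dist_commute)
    show "skew_dist p (skew g w) (skew g w') < \<epsilon>"
      using D2 D3 by (simp add: wy wy' skew_def skew_dist_def)
  qed
qed

lemma skew_iter_cont:
  assumes p: "p \<ge> 1" and g: "\<And>i. i \<in> {1..p} \<Longrightarrow> continuous_on X (g i)"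
    and gX: "\<And>i. i \<in> {1..p} \<Longrightarrow> g i ` X \<subseteq> X"
    and z: "z \<in> shift_space p \<times> X"
  shows "\<epsilon> > 0 \<Longrightarrow> \<exists>\<delta>>0. \<forall>z'\<in>shift_space p \<times> X. skew_dist p z z' < \<delta> \<longrightarrow>
            skew_dist p ((skew g ^^ j) z) ((skew g ^^ j) z') < \<epsilon>"
proof (induction j arbitrary: \<epsilon>)
  case 0 then show ?case by auto
next
  case (Suc j)
  have wM: "(skew g ^^ j) z \<in> shift_space p \<times> X" by (rule skew_iter_space[OF gX z])
  obtain d1 where d1: "d1 > 0" "\<forall>w'\<in>shift_space p \<times> X. skew_dist p ((skew g ^^ j) z) w' < d1 \<longrightarrow>
      skew_dist p (skew g ((skew g ^^ j) z)) (skew g w') < \<epsilon>"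
    using skew_cont[of p X g, OF p g wM Suc.prems] by blast
  obtain d2 where d2: "d2 > 0" "\<forall>z'\<in>shift_space p \<times> X. skew_dist p z z' < d2 \<longrightarrow>
            skew_dist p ((skew g ^^ j) z) ((skew g ^^ j) z') < d1"
    using Suc.IH[OF d1(1)] by blast
  show ?case
  proof (intro exI[of _ d2] conjI ballI impI)
    fix z' assume z': "z' \<in> shift_space p \<times> X" "skew_dist p z z' < d2"
    have A: "(skew g ^^ j) z' \<in> shift_space p \<times> X" by (rule skew_iter_space[OF gX z'(1)])
    have B: "skew_dist p ((skew g ^^ j) z) ((skew g ^^ j) z') < d1" using d2(2) z' by blast
    have "skew_dist p (skew g ((skew g ^^ j) z)) (skew g ((skew g ^^ j) z')) < \<epsilon>"
      by (rule d1(2)[rule_format, OF A B])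
    then show "skew_dist p ((skew g ^^ Suc j) z) ((skew g ^^ Suc j) z') < \<epsilon>" by simp
  qed (use d2 in auto)
qed

lemma Max0_less:
  assumes "finite A" "0 < \<epsilon>" "\<And>j. j \<in> A \<Longrightarrow> f j < (\<epsilon>::real)"
  shows "Max ({0} \<union> f ` A) < \<epsilon>"
  using assms by (subst Max_less_iff) auto

lemma bowen_cont:
  assumes p: "p \<ge> 1" and g: "\<And>i. i \<in> {1..p} \<Longrightarrow> continuous_on X (g i)"
    and gX: "\<And>i. i \<in> {1..p} \<Longrightarrow> g i ` X \<subseteq> X"
    and z: "z \<in> shift_space p \<times> X" and e: "\<epsilon> > 0"
  shows "\<exists>\<delta>>0. \<forall>z'\<in>shift_space p \<times> X. skew_dist p z z' < \<delta> \<longrightarrow> bowen_dist p g n z' z < \<epsilon>"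
proof -
  have "\<exists>\<delta>>0. \<forall>j\<in>{0..<n}. (\<forall>z'\<in>shift_space p \<times> X. skew_dist p z z' < \<delta> \<longrightarrow>
           skew_dist p ((skew g ^^ j) z') ((skew g ^^ j) z) < \<epsilon>)"
  proof (rule finite_min_delta)
    fix j
    show "\<exists>\<delta>>0. \<forall>z'\<in>shift_space p \<times> X. skew_dist p z z' < \<delta> \<longrightarrow>
           skew_dist p ((skew g ^^ j) z') ((skew g ^^ j) z) < \<epsilon>"
      using skew_iter_cont[of p X g z \<epsilon> j, OF p g gX z e] by (simp add: skew_commute)
  next
    fix j \<delta> \<delta>' assume "\<forall>z'\<in>shift_space p \<times> X. skew_dist p z z' < \<delta> \<longrightarrow>
           skew_dist p ((skew g ^^ j) z') ((skew g ^^ j) z) < \<epsilon>" "0 < \<delta>'" "\<delta>' \<le> \<delta>"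
    then show "\<forall>z'\<in>shift_space p \<times> X. skew_dist p z z' < \<delta>' \<longrightarrow>
           skew_dist p ((skew g ^^ j) z') ((skew g ^^ j) z) < \<epsilon>" by auto
  qed simp
  then obtain \<delta> where d: "\<delta> > 0" "\<And>j z'. j \<in> {0..<n} \<Longrightarrow> z' \<in> shift_space p \<times> X \<Longrightarrow> skew_dist p z z' < \<delta> \<Longrightarrow>
           skew_dist p ((skew g ^^ j) z') ((skew g ^^ j) z) < \<epsilon>" by blast
  show ?thesis
  proof (intro exI[of _ \<delta>] conjI ballI impI)
    fix z' assume "z' \<in> shift_space p \<times> X" "skew_dist p z z' < \<delta>"
    then show "bowen_dist p g n z' z < \<epsilon>"
      unfolding bowen_dist_def by (intro Max0_less) (use d e in auto)
  qed (use d in auto)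
qed

lemma (in Metric_space) finite_cover_pointwise:
  assumes "compactin mtopology V" "\<And>z. z \<in> V \<Longrightarrow> \<exists>\<delta>>0. \<forall>z'\<in>M. d z z' < \<delta> \<longrightarrow> R z z'"
  shows "\<exists>E. finite E \<and> E \<subseteq> V \<and> (\<forall>z'\<in>V. \<exists>z\<in>E. R z z')"
proof -
  obtain \<delta> where \<delta>: "\<And>z. z \<in> V \<Longrightarrow> \<delta> z > 0 \<and> (\<forall>z'\<in>M. d z z' < \<delta> z \<longrightarrow> R z z')"
    using assms(2) by metis
  have VM: "V \<subseteq> M" using compactin_subset_topspace[OF assms(1)] by simp
  have "\<forall>U\<in>(\<lambda>z. mball z (\<delta> z)) ` V. openin mtopology U" by auto
  moreover have "V \<subseteq> \<Union>((\<lambda>z. mball z (\<delta> z)) ` V)"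
  proof
    fix z assume "z \<in> V"
    then have "z \<in> mball z (\<delta> z)" using \<delta>[of z] VM by auto
    then show "z \<in> \<Union>((\<lambda>z. mball z (\<delta> z)) ` V)" using \<open>z \<in> V\<close> by blast
  qed
  ultimately obtain F where F: "finite F" "F \<subseteq> (\<lambda>z. mball z (\<delta> z)) ` V" "V \<subseteq> \<Union>F"
    using assms(1) unfolding compactin_def by meson
  then obtain E where E: "E \<subseteq> V" "finite E" "F = (\<lambda>z. mball z (\<delta> z)) ` E"
    by (meson finite_subset_image)
  show ?thesis
  proof (intro exI[of _ E] conjI ballI)
    fix z' assume "z' \<in> V"
    then obtain z where z: "z \<in> E" "z' \<in> mball z (\<delta> z)" using F(3) E(3) by auto
    then have "d z z' < \<delta> z" "z' \<in> M" by auto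
    then show "\<exists>z\<in>E. R z z'" using \<delta>[of z] z(1) E(1) by blast
  qed (use E in auto)
qed

lemma bowen_span_exists:
  assumes p: "p \<ge> 1" and g: "\<And>i. i \<in> {1..p} \<Longrightarrow> continuous_on X (g i)"
    and gX: "\<And>i. i \<in> {1..p} \<Longrightarrow> g i ` X \<subseteq> X"
    and V: "compactin (skew_topology p X) V" and e: "\<epsilon> > 0"
  shows "\<exists>E. finite E \<and> bowen_spanning p g V n \<epsilon> E"
proof -
  interpret Metric_space "shift_space p \<times> X" "skew_dist p" by (rule skew_metric[OF p])
  have VM: "V \<subseteq> shift_space p \<times> X"
    using compactin_subset_topspace[OF V] by (simp add: skew_topology_def)
  have "\<exists>E. finite E \<and> E \<subseteq> V \<and> (\<forall>z'\<in>V. \<exists>z\<in>E. bowen_dist p g n z' z < \<epsilon>)"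
  proof (rule finite_cover_pointwise)
    show "compactin mtopology V" using V by (simp add: skew_topology_def)
    fix z assume "z \<in> V"
    then have "z \<in> shift_space p \<times> X" using VM by auto
    from bowen_cont[OF p g gX this e]
    show "\<exists>\<delta>>0. \<forall>z'\<in>shift_space p \<times> X. skew_dist p z z' < \<delta> \<longrightarrow> bowen_dist p g n z' z < \<epsilon>" .
  qed
  then show ?thesis unfolding bowen_spanning_def .
qed

lemma bn_span_mono:
  assumes p: "p \<ge> 1" and g: "\<And>i. i \<in> {1..p} \<Longrightarrow> continuous_on X (g i)"
    and gX: "\<And>i. i \<in> {1..p} \<Longrightarrow> g i ` X \<subseteq> X"
    and V: "compactin (skew_topology p X) V" and e: "0 < \<epsilon>1" "\<epsilon>1 \<le> \<epsilon>2"
  shows "bn_span p g V n \<epsilon>2 \<le> bn_span p g V n \<epsilon>1"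
proof -
  obtain E0 where "finite E0" "bowen_spanning p g V n \<epsilon>1 E0"
    using bowen_span_exists[of p X g V \<epsilon>1 n, OF p g gX V e(1)] by blast
  then have "\<exists>k E. finite E \<and> card E = k \<and> bowen_spanning p g V n \<epsilon>1 E" by blast
  then have "\<exists>E. finite E \<and> card E = bn_span p g V n \<epsilon>1 \<and> bowen_spanning p g V n \<epsilon>1 E"
    unfolding bn_span_def by (rule LeastI_ex)
  then obtain E where E: "finite E" "card E = bn_span p g V n \<epsilon>1" "bowen_spanning p g V n \<epsilon>1 E"
    by blast
  have "bowen_spanning p g V n \<epsilon>2 E"
    unfolding bowen_spanning_def
  proof (intro conjI ballI)
    show "E \<subseteq> V" using E(3) unfolding bowen_spanning_def by simp
    fix z assume "z \<in> V"
    then obtain z' where "z' \<in> E" "bowen_dist p g n z z' < \<epsilon>1"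
      using E(3) unfolding bowen_spanning_def by blast
    then show "\<exists>z'\<in>E. bowen_dist p g n z z' < \<epsilon>2" using e(2) by force
  qed
  then have "\<exists>E'. finite E' \<and> card E' = card E \<and> bowen_spanning p g V n \<epsilon>2 E'" using E(1) by blast
  then have "bn_span p g V n \<epsilon>2 \<le> card E" unfolding bn_span_def by (rule Least_le)
  with E(2) show ?thesis by simp
qed

lemma fold_cont:
  assumes g: "\<And>i. i \<in> {1..p} \<Longrightarrow> continuous_on X (g i)"
    and gX: "\<And>i. i \<in> {1..p} \<Longrightarrow> g i ` X \<subseteq> X"
  shows "set ws \<subseteq> {1..p} \<Longrightarrow> continuous_on X (fold (\<lambda>i y. g i y) ws) \<and> fold (\<lambda>i y. g i y) ws ` X \<subseteq> X"
proof (induction ws)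
  case Nil then show ?case by simp
next
  case (Cons a ws)
  then have a: "a \<in> {1..p}" and IH: "continuous_on X (fold (\<lambda>i y. g i y) ws)" "fold (\<lambda>i y. g i y) ws ` X \<subseteq> X"
    by auto
  have c: "continuous_on X (fold (\<lambda>i y. g i y) ws \<circ> g a)"
    by (rule continuous_on_compose[OF g[OF a]]) (rule continuous_on_subset[OF IH(1) gX[OF a]])
  have eq: "fold (\<lambda>i y. g i y) (a # ws) = fold (\<lambda>i y. g i y) ws \<circ> g a" by (simp add: fun_eq_iff)
  have "(fold (\<lambda>i y. g i y) ws \<circ> g a) ` X = fold (\<lambda>i y. g i y) ws ` (g a ` X)" by (rule image_comp[symmetric])
  also have "\<dots> \<subseteq> fold (\<lambda>i y. g i y) ws ` X" by (rule image_mono[OF gX[OF a]])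
  also have "\<dots> \<subseteq> X" by (rule IH(2))
  finally show ?case using c unfolding eq by blast
qed

lemma word_cont:
  assumes g: "\<And>i. i \<in> {1..p} \<Longrightarrow> continuous_on X (g i)"
    and gX: "\<And>i. i \<in> {1..p} \<Longrightarrow> g i ` X \<subseteq> X"
    and ws: "set ws \<subseteq> {1..p}" and y: "y \<in> X" and e: "\<epsilon> > 0"
  shows "\<exists>\<delta>>0. \<forall>y'\<in>X. dist y y' < \<delta> \<longrightarrow> word_dist g ws y' y < \<epsilon>"
proof -
  have "\<exists>\<delta>>0. \<forall>j\<in>{0..length ws}. (\<forall>y'\<in>X. dist y y' < \<delta> \<longrightarrow> dist (orbit g ws j y') (orbit g ws j y) < \<epsilon>)"
  proof (rule finite_min_delta)
    fix j
    have "set (take j ws) \<subseteq> {1..p}" using set_take_subset[of j ws] ws by (rule subset_trans)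
    then have "continuous_on X (fold (\<lambda>i y. g i y) (take j ws))"
      using fold_cont[of p X g "take j ws", OF g gX] by blast
    then have cc: "\<forall>x\<in>X. \<forall>e>0. \<exists>d>0. \<forall>x'\<in>X. dist x' x < d \<longrightarrow>
        dist (fold g (take j ws) x') (fold g (take j ws) x) < e" by (simp add: continuous_on_iff)
    then obtain d where d: "d > 0" "\<forall>y'\<in>X. dist y' y < d \<longrightarrow>
        dist (fold g (take j ws) y') (fold g (take j ws) y) < \<epsilon>"
      using bspec[OF cc y, rule_format, OF e] by blast
    show "\<exists>\<delta>>0. \<forall>y'\<in>X. dist y y' < \<delta> \<longrightarrow> dist (orbit g ws j y') (orbit g ws j y) < \<epsilon>"
      by (intro exI[of _ d]) (use d in \<open>auto simp: orbit_def dist_commute\<close>)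
  next
    show "finite {0..length ws}" by simp
  next
    fix j \<delta> \<delta>'
    assume A: "\<forall>y'\<in>X. dist y y' < \<delta> \<longrightarrow> dist (orbit g ws j y') (orbit g ws j y) < \<epsilon>"
      and B: "0 < \<delta>'" "\<delta>' \<le> \<delta>"
    show "\<forall>y'\<in>X. dist y y' < \<delta>' \<longrightarrow> dist (orbit g ws j y') (orbit g ws j y) < \<epsilon>"
    proof (intro ballI impI)
      fix y' assume "y' \<in> X" "dist y y' < \<delta>'"
      then have "dist y y' < \<delta>" using B by linarith
      then show "dist (orbit g ws j y') (orbit g ws j y) < \<epsilon>" using A \<open>y' \<in> X\<close> by blast
    qed
  qed
  then obtain \<delta> where d: "\<delta> > 0" "\<And>j y'. j \<in> {0..length ws} \<Longrightarrow> y' \<in> X \<Longrightarrow> dist y y' < \<delta> \<Longrightarrow>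
      dist (orbit g ws j y') (orbit g ws j y) < \<epsilon>" by blast
  show ?thesis
  proof (intro exI[of _ \<delta>] conjI ballI impI)
    fix y' assume "y' \<in> X" "dist y y' < \<delta>"
    then show "word_dist g ws y' y < \<epsilon>"
      unfolding word_dist_def by (subst Max_less_iff) (use d in auto)
  qed (use d in auto)
qed

lemma bspan_exists:
  assumes g: "\<And>i. i \<in> {1..p} \<Longrightarrow> continuous_on X (g i)"
    and gX: "\<And>i. i \<in> {1..p} \<Longrightarrow> g i ` X \<subseteq> X"
    and ws: "set ws \<subseteq> {1..p}" and K: "compact K" "K \<subseteq> X" and e: "\<epsilon> > 0"
  shows "\<exists>F. finite F \<and> word_spanning g K ws \<epsilon> F"
proof -
  have "\<forall>y\<in>K. \<exists>\<delta>>0. \<forall>y'\<in>X. dist y y' < \<delta> \<longrightarrow> word_dist g ws y' y < \<epsilon>"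
    using word_cont[of p X g ws _ \<epsilon>, OF g gX ws _ e] K(2) by blast
  then obtain \<delta> where \<delta>: "\<And>y. y \<in> K \<Longrightarrow> \<delta> y > 0 \<and> (\<forall>y'\<in>X. dist y y' < \<delta> y \<longrightarrow> word_dist g ws y' y < \<epsilon>)"
    by metis
  have "K \<subseteq> \<Union>((\<lambda>y. ball y (\<delta> y)) ` K)" using \<delta> by force
  then obtain F where F: "F \<subseteq> K" "finite F" "K \<subseteq> \<Union>((\<lambda>y. ball y (\<delta> y)) ` F)"
    using compactE_image[OF K(1), of K "\<lambda>y. ball y (\<delta> y)"] by blast
  have "word_spanning g K ws \<epsilon> F"
    unfolding word_spanning_def
  proof (intro conjI ballI)
    show "F \<subseteq> K" by fact
    fix x assume x: "x \<in> K"
    then obtain y where y: "y \<in> F" "dist y x < \<delta> y" using F(3) by auto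
    have "x \<in> X" using x K(2) by auto
    then have "word_dist g ws x y < \<epsilon>" using \<delta>[of y] y F(1) by blast
    then show "\<exists>y\<in>F. word_dist g ws x y < \<epsilon>" using y(1) by blast
  qed
  then show ?thesis using F(2) by blast
qed

lemma bspan_witness:
  assumes g: "\<And>i. i \<in> {1..p} \<Longrightarrow> continuous_on X (g i)"
    and gX: "\<And>i. i \<in> {1..p} \<Longrightarrow> g i ` X \<subseteq> X"
    and ws: "set ws \<subseteq> {1..p}" and K: "compact K" "K \<subseteq> X" and e: "\<epsilon> > 0"
  obtains F where "finite F" "card F = bspan g K ws \<epsilon>" "word_spanning g K ws \<epsilon> F"
proof -
  obtain F0 where "finite F0" "word_spanning g K ws \<epsilon> F0"
    using bspan_exists[of p X g ws K \<epsilon>, OF g gX ws K e] by blast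
  then have "\<exists>k F. finite F \<and> card F = k \<and> word_spanning g K ws \<epsilon> F" by blast
  then have "\<exists>F. finite F \<and> card F = bspan g K ws \<epsilon> \<and> word_spanning g K ws \<epsilon> F"
    unfolding bspan_def by (rule LeastI_ex)
  then show ?thesis using that by blast
qed

lemma bspan_pos:
  assumes g: "\<And>i. i \<in> {1..p} \<Longrightarrow> continuous_on X (g i)"
    and gX: "\<And>i. i \<in> {1..p} \<Longrightarrow> g i ` X \<subseteq> X"
    and ws: "set ws \<subseteq> {1..p}" and K: "compact K" "K \<subseteq> X" "K \<noteq> {}" and e: "\<epsilon> > 0"
  shows "bspan g K ws \<epsilon> \<ge> 1"
proof -
  obtain F where F: "finite F" "card F = bspan g K ws \<epsilon>" "word_spanning g K ws \<epsilon> F"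
    using bspan_witness[of p X g ws K \<epsilon>, OF g gX ws K(1,2) e] by blast
  have "F \<noteq> {}" using F(3) K(3) unfolding word_spanning_def by blast
  then have "card F \<ge> 1" using F(1) by (simp add: Suc_leI card_gt_0_iff)
  with F(2) show ?thesis by simp
qed

lemma bspan_mono:
  assumes g: "\<And>i. i \<in> {1..p} \<Longrightarrow> continuous_on X (g i)"
    and gX: "\<And>i. i \<in> {1..p} \<Longrightarrow> g i ` X \<subseteq> X"
    and ws: "set ws \<subseteq> {1..p}" and K: "compact K" "K \<subseteq> X" and e: "0 < \<epsilon>1" "\<epsilon>1 \<le> \<epsilon>2"
  shows "bspan g K ws \<epsilon>2 \<le> bspan g K ws \<epsilon>1"
proof -
  obtain F where F: "finite F" "card F = bspan g K ws \<epsilon>1" "word_spanning g K ws \<epsilon>1 F"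
    using bspan_witness[of p X g ws K \<epsilon>1, OF g gX ws K e(1)] by blast
  have "word_spanning g K ws \<epsilon>2 F"
    unfolding word_spanning_def
  proof (intro conjI ballI)
    show "F \<subseteq> K" using F(3) unfolding word_spanning_def by simp
    fix z assume "z \<in> K"
    then obtain z' where "z' \<in> F" "word_dist g ws z z' < \<epsilon>1"
      using F(3) unfolding word_spanning_def by blast
    then show "\<exists>z'\<in>F. word_dist g ws z z' < \<epsilon>2" using e(2) by force
  qed
  then have "\<exists>F'. finite F' \<and> card F' = card F \<and> word_spanning g K ws \<epsilon>2 F'" using F(1) by blast
  then have "bspan g K ws \<epsilon>2 \<le> card F" unfolding bspan_def by (rule Least_le)
  with F(2) show ?thesis by simp
qed

lemma skew_iter: "(skew g ^^ j) (\<omega>, y) = ((\<lambda>i. \<omega> (i + j)), fold g (map \<omega> [0..<j]) y)"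
  by (induction j) (simp_all add: skew_def)

lemma words_finite: "finite (words p n)"
  unfolding words_def using finite_lists_length_eq[of "{1..p}" n] by (simp add: conj_commute)

lemma words_card: "card (words p n) = p ^ n"
  unfolding words_def using card_lists_length_eq[of "{1..p}" n] by (simp add: conj_commute)

lemma words_ne: "p \<ge> 1 \<Longrightarrow> replicate n 1 \<in> words p n"
  unfolding words_def by auto

definition ext_word :: "nat list \<Rightarrow> nat \<Rightarrow> nat" where
  "ext_word u = (\<lambda>i. if i < length u then u ! i else 1)"

lemma ext_word_space: "p \<ge> 1 \<Longrightarrow> set u \<subseteq> {1..p} \<Longrightarrow> ext_word u \<in> shift_space p"
  unfolding ext_word_def shift_space_def using nth_mem by fastforce

lemma map_shift_word: "\<omega> \<in> shift_space p \<Longrightarrow> map \<omega> [a..<b] \<in> words p (b - a)"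
  unfolding words_def shift_space_def by auto

lemma ext_word_map: "i < n \<Longrightarrow> ext_word (map \<omega> [0..<n]) i = \<omega> i"
  unfolding ext_word_def by simp

lemma bowen_close:
  assumes p: "p \<ge> 1" and \<omega>: "\<omega> \<in> shift_space p" and \<omega>': "\<omega>' \<in> shift_space p"
    and agree: "\<And>i. i < n + m \<Longrightarrow> \<omega>' i = \<omega> i"
    and m: "(1/2::real) ^ Suc m < \<epsilon>" and wd: "word_dist g (map \<omega> [0..<n]) y y' < \<epsilon>"
  shows "bowen_dist p g n (\<omega>, y) (\<omega>', y') < \<epsilon>"
  unfolding bowen_dist_def
proof (rule Max0_less)
  show "finite {0..<n}" by simp
  have "(0::real) < (1/2) ^ Suc m" by simp
  then show "0 < \<epsilon>" using m by linarith
  fix j assume "j \<in> {0..<n}"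
  then have j: "j < n" by simp
  have mapeq: "map \<omega>' [0..<j] = map \<omega> [0..<j]" using agree j by simp
  have s1: "(\<lambda>i. \<omega> (i + j)) \<in> shift_space p" "(\<lambda>i. \<omega>' (i + j)) \<in> shift_space p"
    using \<omega> \<omega>' by (auto simp: shift_space_def)
  have "Dshift p (\<lambda>i. \<omega> (i + j)) (\<lambda>i. \<omega>' (i + j)) \<le> (1/2) ^ Suc m"
    by (rule Dshift_agree[OF p s1]) (use agree j in auto)
  then have D: "Dshift p (\<lambda>i. \<omega> (i + j)) (\<lambda>i. \<omega>' (i + j)) < \<epsilon>" using m by linarith
  have tk: "take j (map \<omega> [0..<n]) = map \<omega> [0..<j]" using j by (simp add: take_map)
  have "dist (orbit g (map \<omega> [0..<n]) j y) (orbit g (map \<omega> [0..<n]) j y') \<le> word_dist g (map \<omega> [0..<n]) y y'"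
    unfolding word_dist_def by (rule Max_ge) (use j in auto)
  then have "dist (fold g (map \<omega> [0..<j]) y) (fold g (map \<omega> [0..<j]) y') < \<epsilon>"
    using wd tk by (simp add: orbit_def)
  with D show "skew_dist p ((skew g ^^ j) (\<omega>, y)) ((skew g ^^ j) (\<omega>', y')) < \<epsilon>"
    by (simp add: skew_iter skew_dist_def mapeq)
qed

lemma bn_span_bound:
  assumes p: "p \<ge> 1" and g: "\<And>i. i \<in> {1..p} \<Longrightarrow> continuous_on X (g i)"
    and gX: "\<And>i. i \<in> {1..p} \<Longrightarrow> g i ` X \<subseteq> X"
    and K: "compact K" "K \<subseteq> X" and e: "\<epsilon> > 0" and m: "(1/2::real) ^ Suc m < \<epsilon>"
  shows "bn_span p g (shift_space p \<times> K) n \<epsilon> \<le> p ^ m * (\<Sum>w\<in>words p n. bspan g K w \<epsilon>)"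
proof -
  have "\<forall>w\<in>words p n. \<exists>F. finite F \<and> card F = bspan g K w \<epsilon> \<and> word_spanning g K w \<epsilon> F"
  proof
    fix w assume "w \<in> words p n"
    then have "set w \<subseteq> {1..p}" by (simp add: words_def)
    from bspan_witness[of p X g w K \<epsilon>, OF g gX this K e]
    show "\<exists>F. finite F \<and> card F = bspan g K w \<epsilon> \<and> word_spanning g K w \<epsilon> F" by blast
  qed
  then obtain Fs where Fs: "\<And>w. w \<in> words p n \<Longrightarrow> finite (Fs w) \<and> card (Fs w) = bspan g K w \<epsilon> \<and> word_spanning g K w \<epsilon> (Fs w)"
    by metis
  define E where "E = (\<Union>wv\<in>words p n \<times> words p m. (\<lambda>y. (ext_word (fst wv @ snd wv), y)) ` Fs (fst wv))"
  have finE: "finite E" unfolding E_def using words_finite Fs by auto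
  have "card E \<le> (\<Sum>wv\<in>words p n \<times> words p m. card ((\<lambda>y. (ext_word (fst wv @ snd wv), y)) ` Fs (fst wv)))"
    unfolding E_def by (rule card_UN_le) (simp add: words_finite)
  also have "\<dots> \<le> (\<Sum>wv\<in>words p n \<times> words p m. bspan g K (fst wv) \<epsilon>)"
  proof (rule sum_mono)
    fix wv assume "wv \<in> words p n \<times> words p m"
    then have F: "finite (Fs (fst wv))" "card (Fs (fst wv)) = bspan g K (fst wv) \<epsilon>"
      using Fs[of "fst wv"] by (auto simp: mem_Times_iff)
    show "card ((\<lambda>y. (ext_word (fst wv @ snd wv), y)) ` Fs (fst wv)) \<le> bspan g K (fst wv) \<epsilon>"
      using card_image_le[OF F(1), of "\<lambda>y. (ext_word (fst wv @ snd wv), y)"] F(2) by simp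
  qed
  also have "\<dots> = (\<Sum>w\<in>words p n. \<Sum>v\<in>words p m. bspan g K w \<epsilon>)"
    using sum.cartesian_product[of "\<lambda>w v. bspan g K w \<epsilon>" "words p m" "words p n"]
    by (simp add: split_def)
  also have "\<dots> = p ^ m * (\<Sum>w\<in>words p n. bspan g K w \<epsilon>)"
    by (simp add: words_card sum_distrib_left)
  finally have cardE: "card E \<le> p ^ m * (\<Sum>w\<in>words p n. bspan g K w \<epsilon>)" .
  have span: "bowen_spanning p g (shift_space p \<times> K) n \<epsilon> E"
    unfolding bowen_spanning_def
  proof (intro conjI ballI)
    show "E \<subseteq> shift_space p \<times> K"
    proof
      fix z assume "z \<in> E"
      then obtain w v y where wv: "w \<in> words p n" "v \<in> words p m" "y \<in> Fs w" "z = (ext_word (w @ v), y)"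
        unfolding E_def by auto
      have "set (w @ v) \<subseteq> {1..p}" using wv(1,2) by (auto simp: words_def)
      then have "ext_word (w @ v) \<in> shift_space p" by (rule ext_word_space[OF p])
      moreover have "y \<in> K" using Fs[OF wv(1)] wv(3) unfolding word_spanning_def by blast
      ultimately show "z \<in> shift_space p \<times> K" using wv(4) by simp
    qed
    fix z assume "z \<in> shift_space p \<times> K"
    then obtain \<omega> y where z: "z = (\<omega>, y)" "\<omega> \<in> shift_space p" "y \<in> K" by auto
    define w where "w = map \<omega> [0..<n]"
    define v where "v = map \<omega> [n..<n+m]"
    have w: "w \<in> words p n" unfolding w_def using map_shift_word[OF z(2), of 0 n] by simp
    have v: "v \<in> words p m" unfolding v_def using map_shift_word[OF z(2), of n "n+m"] by simp
    obtain y' where y': "y' \<in> Fs w" "word_dist g w y y' < \<epsilon>"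
      using Fs[OF w] z(3) unfolding word_spanning_def by blast
    have wv: "w @ v = map \<omega> [0..<n+m]" unfolding w_def v_def
      by (simp add: upt_add_eq_append[of 0 n m, simplified] )
    have inE: "(ext_word (w @ v), y') \<in> E" unfolding E_def using w v y'(1) by force
    have "set (w @ v) \<subseteq> {1..p}" using w v by (auto simp: words_def)
    then have sp: "ext_word (w @ v) \<in> shift_space p" by (rule ext_word_space[OF p])
    have "bowen_dist p g n (\<omega>, y) (ext_word (w @ v), y') < \<epsilon>"
      by (rule bowen_close[OF p z(2) sp _ m]) (use y'(2) wv ext_word_map w_def in auto)
    then show "\<exists>z'\<in>E. bowen_dist p g n z z' < \<epsilon>" using inE z(1) by blast
  qed
  have "\<exists>E'. finite E' \<and> card E' = card E \<and> bowen_spanning p g (shift_space p \<times> K) n \<epsilon> E'"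
    using finE span by blast
  then have "bn_span p g (shift_space p \<times> K) n \<epsilon> \<le> card E" unfolding bn_span_def by (rule Least_le)
  with cardE show ?thesis by linarith
qed

lemma Bskew_bound:
  assumes p: "p \<ge> 1" and g: "\<And>i. i \<in> {1..p} \<Longrightarrow> continuous_on X (g i)"
    and gX: "\<And>i. i \<in> {1..p} \<Longrightarrow> g i ` X \<subseteq> X"
    and K: "compact K" "K \<subseteq> X" "K \<noteq> {}" and e: "\<epsilon> > 0"
  shows "Bskew p g (shift_space p \<times> K) \<epsilon> \<le> Bsemi p g K \<epsilon> + ereal (ln (real p))"
proof -
  obtain m where m: "(1/2::real) ^ Suc m < \<epsilon>" using half_pow_small[OF e] by blast
  define S where "S n = (\<Sum>w\<in>words p n. real (bspan g K w \<epsilon>))" for n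
  define bn where "bn n = bn_span p g (shift_space p \<times> K) n \<epsilon>" for n
  define c where "c = real m * ln (real p)"
  have S1: "S n \<ge> 1" for n
  proof -
    have "(\<Sum>w\<in>words p n. (1::real)) \<le> S n" unfolding S_def
    proof (rule sum_mono)
      fix w assume "w \<in> words p n"
      then have "set w \<subseteq> {1..p}" by (simp add: words_def)
      from bspan_pos[of p X g w K \<epsilon>, OF g gX this K e] show "1 \<le> real (bspan g K w \<epsilon>)" by simp
    qed
    moreover have "(\<Sum>w\<in>words p n. (1::real)) = real p ^ n" by (simp add: words_card)
    moreover have "(1::real) \<le> real p ^ n" using p by simp
    ultimately show ?thesis by linarith
  qed
  have bnS: "real (bn n) \<le> real p ^ m * S n" for n
  proof -
    have "bn n \<le> p ^ m * (\<Sum>w\<in>words p n. bspan g K w \<epsilon>)"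
      unfolding bn_def by (rule bn_span_bound[OF p g gX K(1,2) e m])
    then have "real (bn n) \<le> real (p ^ m * (\<Sum>w\<in>words p n. bspan g K w \<epsilon>))" by linarith
    then show ?thesis by (simp add: S_def)
  qed
  have key: "ln (real (bn n)) / real n \<le> c / real n + (ln (S n / real p ^ n) / real n + ln (real p))" for n
  proof (cases "n = 0")
    case True then show ?thesis using p by simp
  next
    case False
    have pp: "real p > 0" using p by simp
    have Sp: "S n > 0" using S1[of n] by linarith
    have "1 \<le> real p ^ m" using p by simp
    then have pS: "real p ^ m * S n \<ge> 1" using S1[of n] by (metis mult_mono' mult_1 zero_le_one)
    have l1: "ln (real (bn n)) \<le> ln (real p ^ m * S n)"
    proof (cases "bn n = 0")
      case True then show ?thesis using pS by simp
    next
      case False then show ?thesis using bnS[of n] pS by (subst ln_le_cancel_iff) auto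
    qed
    have l2: "ln (real p ^ m * S n) = c + ln (S n)" unfolding c_def
      using pp Sp by (simp add: ln_mult ln_realpow)
    have l3: "ln (S n / real p ^ n) = ln (S n) - real n * ln (real p)"
      using pp Sp by (simp add: ln_div ln_realpow)
    have "ln (real (bn n)) / real n \<le> (c + ln (S n)) / real n"
      using l1 l2 False by (simp add: divide_right_mono)
    also have "(c + ln (S n)) / real n = c / real n + (ln (S n / real p ^ n) / real n + ln (real p))"
      unfolding l3 using False by (simp add: field_simps)
    finally show ?thesis .
  qed
  have "Bskew p g (shift_space p \<times> K) \<epsilon> = limsup (\<lambda>n. ereal (ln (real (bn n)) / real n))"
    by (simp add: Bskew_def bn_def)
  also have "\<dots> \<le> limsup (\<lambda>n. ereal (c / real n) + (ereal (ln (S n / real p ^ n) / real n) + ereal (ln (real p))))"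
    by (rule Limsup_mono) (use key in simp)
  also have "\<dots> \<le> limsup (\<lambda>n. ereal (c / real n)) + limsup (\<lambda>n. ereal (ln (S n / real p ^ n) / real n) + ereal (ln (real p)))"
    by (rule ereal_limsup_add_mono)
  also have "limsup (\<lambda>n. ereal (c / real n)) = 0"
    by (rule lim_imp_Limsup) (auto intro!: tendsto_eq_intros lim_const_over_n simp: zero_ereal_def)
  also have "limsup (\<lambda>n. ereal (ln (S n / real p ^ n) / real n) + ereal (ln (real p)))
      = limsup (\<lambda>n. ereal (ln (S n / real p ^ n) / real n)) + ereal (ln (real p))"
    by (rule Limsup_add_ereal_right) auto
  also have "limsup (\<lambda>n. ereal (ln (S n / real p ^ n) / real n)) = Bsemi p g K \<epsilon>"
    by (simp add: Bsemi_def S_def)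
  finally show ?thesis by simp
qed

lemma Lim_antitone:
  fixes f :: "real \<Rightarrow> ereal"
  assumes mono: "\<And>a b. 0 < a \<Longrightarrow> a \<le> b \<Longrightarrow> f b \<le> f a"
  shows "Lim (at_right 0) f = (SUP e\<in>{0<..}. f e)"
proof -
  have "(f \<longlongrightarrow> (SUP e\<in>{0<..}. f e)) (at_right 0)"
  proof (rule order_tendstoI)
    fix a assume "a < (SUP e\<in>{0<..}. f e)"
    then obtain e where e: "e \<in> {0<..}" "a < f e" by (subst (asm) less_SUP_iff) blast
    show "eventually (\<lambda>x. a < f x) (at_right 0)"
      unfolding eventually_at_right_field
    proof (intro exI[of _ e] conjI allI impI)
      show "0 < e" using e by simp
      fix y :: real assume "0 < y" "y < e"
      then have "f e \<le> f y" using mono by simp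
      then show "a < f y" using e(2) by simp
    qed
  next
    fix a assume a: "(SUP e\<in>{0<..}. f e) < a"
    show "eventually (\<lambda>x. f x < a) (at_right 0)"
      unfolding eventually_at_right_field
    proof (intro exI[of _ 1] conjI allI impI)
      fix y :: real assume "0 < y" "y < 1"
      then have "f y \<le> (SUP e\<in>{0<..}. f e)" by (intro SUP_upper) simp
      then show "f y < a" using a by simp
    qed simp
  qed
  then show ?thesis by (rule tendsto_Lim[rotated]) simp
qed




lemma compact_nhd_props:
  assumes "compact_nhd_in X x K"
  shows "compact K" "K \<subseteq> X" "K \<noteq> {}"
  using assms unfolding compact_nhd_in_def by auto

lemma Bsemi_nonneg:
  assumes p: "p \<ge> 1" and g: "\<And>i. i \<in> {1..p} \<Longrightarrow> continuous_on X (g i)"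
    and gX: "\<And>i. i \<in> {1..p} \<Longrightarrow> g i ` X \<subseteq> X"
    and K: "compact K" "K \<subseteq> X" "K \<noteq> {}" and e: "\<epsilon> > 0"
  shows "0 \<le> Bsemi p g K \<epsilon>"
proof -
  have "ereal 0 \<le> ereal (ln ((\<Sum>ws\<in>words p n. real (bspan g K ws \<epsilon>)) / real p ^ n) / real n)" for n
  proof -
    have "(\<Sum>w\<in>words p n. (1::real)) \<le> (\<Sum>ws\<in>words p n. real (bspan g K ws \<epsilon>))"
    proof (rule sum_mono)
      fix w assume "w \<in> words p n"
      then have "set w \<subseteq> {1..p}" by (simp add: words_def)
      from bspan_pos[of p X g w K \<epsilon>, OF g gX this K e] show "1 \<le> real (bspan g K w \<epsilon>)" by simp
    qed
    then have "real p ^ n \<le> (\<Sum>ws\<in>words p n. real (bspan g K ws \<epsilon>))" by (simp add: words_card)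
    moreover have "real p ^ n > 0" using p by simp
    ultimately have "1 \<le> (\<Sum>ws\<in>words p n. real (bspan g K ws \<epsilon>)) / real p ^ n" by simp
    then have "0 \<le> ln ((\<Sum>ws\<in>words p n. real (bspan g K ws \<epsilon>)) / real p ^ n)" by simp
    then show ?thesis by simp
  qed
  then have "limsup (\<lambda>n. ereal 0) \<le> Bsemi p g K \<epsilon>"
    unfolding Bsemi_def by (intro Limsup_mono) simp
  then show ?thesis by (simp add: Limsup_const zero_ereal_def)
qed

lemma Bsemi_mono:
  assumes p: "p \<ge> 1" and g: "\<And>i. i \<in> {1..p} \<Longrightarrow> continuous_on X (g i)"
    and gX: "\<And>i. i \<in> {1..p} \<Longrightarrow> g i ` X \<subseteq> X"
    and K: "compact K" "K \<subseteq> X" "K \<noteq> {}" and e: "0 < \<epsilon>1" "\<epsilon>1 \<le> \<epsilon>2"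
  shows "Bsemi p g K \<epsilon>2 \<le> Bsemi p g K \<epsilon>1"
  unfolding Bsemi_def
proof (intro Limsup_mono always_eventually allI)
  fix n
  have e2: "\<epsilon>2 > 0" using e by simp
  have le: "(\<Sum>ws\<in>words p n. real (bspan g K ws \<epsilon>2)) \<le> (\<Sum>ws\<in>words p n. real (bspan g K ws \<epsilon>1))"
  proof (rule sum_mono)
    fix w assume "w \<in> words p n"
    then have "set w \<subseteq> {1..p}" by (simp add: words_def)
    from bspan_mono[of p X g w K \<epsilon>1 \<epsilon>2, OF g gX this K(1,2) e]
    show "real (bspan g K w \<epsilon>2) \<le> real (bspan g K w \<epsilon>1)" by simp
  qed
  have pos: "(\<Sum>ws\<in>words p n. real (bspan g K ws \<epsilon>2)) > 0"
  proof -
    have "replicate n 1 \<in> words p n" by (rule words_ne[OF p])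
    moreover have "set (replicate n (1::nat)) \<subseteq> {1..p}" using p by auto
    then have "bspan g K (replicate n 1) \<epsilon>2 \<ge> 1"
      using bspan_pos[of p X g "replicate n 1" K \<epsilon>2] g gX K e2 by blast
    ultimately show ?thesis
      by (intro sum_pos2[of _ "replicate n 1"]) (auto simp: words_finite)
  qed
  have pp: "real p ^ n > 0" using p by simp
  have "ln ((\<Sum>ws\<in>words p n. real (bspan g K ws \<epsilon>2)) / real p ^ n)
      \<le> ln ((\<Sum>ws\<in>words p n. real (bspan g K ws \<epsilon>1)) / real p ^ n)"
    using le pos pp by (subst ln_le_cancel_iff) (auto intro: divide_right_mono order_less_le_trans)
  then show "ereal (ln ((\<Sum>ws\<in>words p n. real (bspan g K ws \<epsilon>2)) / real p ^ n) / real n)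
      \<le> ereal (ln ((\<Sum>ws\<in>words p n. real (bspan g K ws \<epsilon>1)) / real p ^ n) / real n)"
    by (simp add: divide_right_mono)
qed

lemma Bskew_mono:
  assumes p: "p \<ge> 1" and g: "\<And>i. i \<in> {1..p} \<Longrightarrow> continuous_on X (g i)"
    and gX: "\<And>i. i \<in> {1..p} \<Longrightarrow> g i ` X \<subseteq> X"
    and V: "compactin (skew_topology p X) V" and e: "0 < \<epsilon>1" "\<epsilon>1 \<le> \<epsilon>2"
  shows "Bskew p g V \<epsilon>2 \<le> Bskew p g V \<epsilon>1"
  unfolding Bskew_def
proof (intro Limsup_mono always_eventually allI)
  fix n
  have le: "bn_span p g V n \<epsilon>2 \<le> bn_span p g V n \<epsilon>1"
    by (rule bn_span_mono[of p X g V \<epsilon>1 \<epsilon>2 n, OF p g gX V e])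
  have "ln (real (bn_span p g V n \<epsilon>2)) \<le> ln (real (bn_span p g V n \<epsilon>1))"
  proof (cases "bn_span p g V n \<epsilon>2 = 0")
    case True
    show ?thesis
    proof (cases "bn_span p g V n \<epsilon>1 = 0")
      case False then have "real (bn_span p g V n \<epsilon>1) \<ge> 1" by simp
      then show ?thesis using True by simp
    qed (use True in simp)
  next
    case False then show ?thesis using le by (subst ln_le_cancel_iff) auto
  qed
  then show "ereal (ln (real (bn_span p g V n \<epsilon>2)) / real n) \<le> ereal (ln (real (bn_span p g V n \<epsilon>1)) / real n)"
    by (simp add: divide_right_mono)
qed

theorem mainTheorem9:
  fixes X :: "'a::metric_space set" and g :: "nat \<Rightarrow> 'a \<Rightarrow> 'a" and p :: nat and x :: 'a
  assumes "compact X"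
    and "p \<ge> 1"
    and "\<And>i. i \<in> {1..p} \<Longrightarrow> continuous_on X (g i)"
    and "\<And>i. i \<in> {1..p} \<Longrightarrow> g i ` X \<subseteq> X"
    and "x \<in> X"
  shows "(SUP \<omega>\<in>shift_space p. hskew p g X (\<omega>, x)) \<le> hsemi p g X x + ereal (ln (real p))"
proof -
  note X = assms(1) and p = assms(2) and g = assms(3) and gX = assms(4) and x = assms(5)
  define c where "c = ereal (ln (real p))"
  have XK: "compact_nhd_in X x X" unfolding compact_nhd_in_def using X x by blast
  have step: "hskew_eps p g X (\<omega>, x) \<epsilon> \<le> hsemi_eps p g X x \<epsilon> + c"
    if \<omega>: "\<omega> \<in> shift_space p" and e: "\<epsilon> > 0" for \<omega> \<epsilon>
  proof -
    have "hskew_eps p g X (\<omega>, x) \<epsilon> \<le> (INF K\<in>{K. compact_nhd_in X x K}. Bsemi p g K \<epsilon> + c)"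
    proof (rule INF_greatest)
      fix K assume "K \<in> {K. compact_nhd_in X x K}"
      then have K: "compact_nhd_in X x K" by simp
      have "compact_nhd_skew p X (\<omega>, x) (shift_space p \<times> K)"
        by (rule nhd_skew_prod[OF p K \<omega>])
      then have "hskew_eps p g X (\<omega>, x) \<epsilon> \<le> Bskew p g (shift_space p \<times> K) \<epsilon>"
        unfolding hskew_eps_def by (intro INF_lower) simp
      also have "\<dots> \<le> Bsemi p g K \<epsilon> + c" unfolding c_def
        using Bskew_bound[of p X g K \<epsilon>] p g gX compact_nhd_props[OF K] e by blast
      finally show "hskew_eps p g X (\<omega>, x) \<epsilon> \<le> Bsemi p g K \<epsilon> + c" .
    qed
    also have "\<dots> = hsemi_eps p g X x \<epsilon> + c" unfolding hsemi_eps_def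
    proof (rule INF_ereal_add_left)
      show "{K. compact_nhd_in X x K} \<noteq> {}" using XK by blast
      show "c \<noteq> - \<infinity>" by (simp add: c_def)
      fix K assume "K \<in> {K. compact_nhd_in X x K}"
      then have K: "compact_nhd_in X x K" by simp
      show "0 \<le> Bsemi p g K \<epsilon>"
        using Bsemi_nonneg[of p X g K \<epsilon>] p g gX compact_nhd_props[OF K] e by blast
    qed
    finally show ?thesis .
  qed
  have semi_mono: "hsemi_eps p g X x b \<le> hsemi_eps p g X x a" if "0 < a" "a \<le> b" for a b
    unfolding hsemi_eps_def
  proof (rule INF_mono)
    fix K assume K0: "K \<in> {K. compact_nhd_in X x K}"
    then have K: "compact_nhd_in X x K" by simp
    have "Bsemi p g K b \<le> Bsemi p g K a"
      using Bsemi_mono[of p X g K a b] p g gX compact_nhd_props[OF K] that by blast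
    then show "\<exists>K'\<in>{K. compact_nhd_in X x K}. Bsemi p g K' b \<le> Bsemi p g K a" using K0 by blast
  qed
  have skew_mono: "hskew_eps p g X z b \<le> hskew_eps p g X z a" if "0 < a" "a \<le> b" for a b z
    unfolding hskew_eps_def
  proof (rule INF_mono)
    fix V assume V0: "V \<in> {V. compact_nhd_skew p X z V}"
    then have V: "compactin (skew_topology p X) V" by (simp add: compact_nhd_skew_def)
    have "Bskew p g V b \<le> Bskew p g V a"
      using Bskew_mono[of p X g V a b] p g gX V that by blast
    then show "\<exists>V'\<in>{V. compact_nhd_skew p X z V}. Bskew p g V' b \<le> Bskew p g V a" using V0 by blast
  qed
  have hsemi: "hsemi p g X x = (SUP e\<in>{0<..}. hsemi_eps p g X x e)"
    unfolding hsemi_def by (rule Lim_antitone) (rule semi_mono)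
  have hskew: "hskew p g X z = (SUP e\<in>{0<..}. hskew_eps p g X z e)" for z
    unfolding hskew_def by (rule Lim_antitone) (rule skew_mono)
  show ?thesis
  proof (rule SUP_least)
    fix \<omega> assume \<omega>: "\<omega> \<in> shift_space p"
    show "hskew p g X (\<omega>, x) \<le> hsemi p g X x + ereal (ln (real p))"
      unfolding hskew
    proof (rule SUP_least)
      fix e :: real assume "e \<in> {0<..}"
      then have e: "e > 0" by simp
      have "hskew_eps p g X (\<omega>, x) e \<le> hsemi_eps p g X x e + c" by (rule step[OF \<omega> e])
      also have "\<dots> \<le> hsemi p g X x + c"
        unfolding hsemi by (intro add_right_mono SUP_upper) (use e in simp)
      finally show "hskew_eps p g X (\<omega>, x) e \<le> hsemi p g X x + ereal (ln (real p))"
        by (simp add: c_def)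
    qed
  qed
qed

end
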